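(* Let $T$ be a metric tree with uniform branch growth. If $T'$ is a metric space quasisymmetrically homeomorphic to $T$, then $T'$ has uniform branch growth.
   Context: A metric tree is a compact connected locally connected metric space with at least two points where any two points are joined by a unique arc. Branches of $T$ at $p$: components of $T\setminus\{p\}$; $p$ is a branch point if there are at least three. For a branch point label the branches $B^1_T(p),B^2_T(p),\dots$ so that diameters are non-increasing. $T$ has uniform branch growth if there is $C\ge1$ with $\mathrm{diam}B^i_T(p)\ge C^{-1}\mathrm{diam}B^3_T(p)$ for all branch points $p$ and all $i\ge3$. A homeomorphism $f:X\to Y$ is quasisymmetric if there is a homeomorphism $\eta:[0,\infty)\to[0,\infty)$ with $d_Y(f(x),f(a))/d_Y(f(x),f(b))\le\eta(d_X(x,a)/d_X(x,b))$ for all $x,a,b$ with $x\ne b$. *)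

theory Defs
  imports "HOL-Analysis.Analysis"
begin

definition metric_tree :: "'a::metric_space set \<Rightarrow> bool" where
  "metric_tree T \<longleftrightarrow> compact T \<and> connected T \<and> locally connected T \<and>
     (\<exists>x\<in>T. \<exists>y\<in>T. x \<noteq> y) \<and>
     (\<forall>x\<in>T. \<forall>y\<in>T. x \<noteq> y \<longrightarrow>
        (\<exists>!A. \<exists>g. arc g \<and> pathstart g = x \<and> pathfinish g = y \<and>
                   path_image g \<subseteq> T \<and> path_image g = A))"

definition branches :: "'a::metric_space set \<Rightarrow> 'a \<Rightarrow> 'a set set" where
  "branches T p = components (T - {p})"

definition branch_point :: "'a::metric_space set \<Rightarrow> 'a \<Rightarrow> bool" where
  "branch_point T p \<longleftrightarrow> p \<in> T \<and>
     (\<exists>B1 B2 B3. B1 \<in> branches T p \<and> B2 \<in> branches T p \<and> B3 \<in> branches T p \<and>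
        B1 \<noteq> B2 \<and> B1 \<noteq> B3 \<and> B2 \<noteq> B3)"

definition branch_labelling ::
    "'a::metric_space set \<Rightarrow> 'a \<Rightarrow> nat set \<Rightarrow> (nat \<Rightarrow> 'a set) \<Rightarrow> bool" where
  "branch_labelling T p I B \<longleftrightarrow>
     (I = {1..} \<or> (\<exists>n. I = {1..n})) \<and>
     bij_betw B I (branches T p) \<and>
     (\<forall>i\<in>I. \<forall>j\<in>I. i \<le> j \<longrightarrow> diameter (B j) \<le> diameter (B i))"

definition uniform_branch_growth :: "'a::metric_space set \<Rightarrow> bool" where
  "uniform_branch_growth T \<longleftrightarrow>
     (\<exists>C::real. C \<ge> 1 \<and>
        (\<forall>p. branch_point T p \<longrightarrow>
           (\<forall>I B. branch_labelling T p I B \<longrightarrow>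
              (\<forall>i\<in>I. i \<ge> 3 \<longrightarrow> diameter (B i) \<ge> diameter (B 3) / C))))"

definition quasisymmetric ::
    "'a::metric_space set \<Rightarrow> 'b::metric_space set \<Rightarrow> ('a \<Rightarrow> 'b) \<Rightarrow> bool" where
  "quasisymmetric X Y f \<longleftrightarrow>
     (\<exists>g. homeomorphism X Y f g) \<and>
     (\<exists>\<eta> \<eta>'. homeomorphism {0::real..} {0..} \<eta> \<eta>' \<and>
        (\<forall>x\<in>X. \<forall>a\<in>X. \<forall>b\<in>X. x \<noteq> b \<longrightarrow>
           dist (f x) (f a) / dist (f x) (f b) \<le> \<eta> (dist x a / dist x b)))"

end

theory Submission
  imports Defs
begin

lemma exists_sorted_enum:
  fixes S :: "'x set" and d :: "'x \<Rightarrow> real"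
  assumes pos: "\<forall>x\<in>S. d x > 0" and fin: "\<forall>\<delta>>0. finite {x\<in>S. d x \<ge> \<delta>}"
  shows "\<exists>(I::nat set) e. (I = {1..} \<or> (\<exists>n. I = {1..n})) \<and> bij_betw e I S \<and>
           (\<forall>i\<in>I. \<forall>j\<in>I. i \<le> j \<longrightarrow> d (e j) \<le> d (e i))"
proof -
  have "S = (\<Union>n. {x\<in>S. d x \<ge> 1 / Suc n})"
  proof (intro equalityI subsetI)
    fix x assume "x \<in> S"
    then have "d x > 0" using pos by auto
    then obtain n where "1 / Suc n < d x" using reals_Archimedean
      by (metis inverse_eq_divide)
    then show "x \<in> (\<Union>n. {x\<in>S. d x \<ge> 1 / Suc n})" using \<open>x\<in>S\<close> by (auto intro!: exI[of _ n])
  qed auto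
  moreover have "countable {x\<in>S. d x \<ge> 1 / Suc n}" for n
    using fin by (intro countable_finite) auto
  then have "countable (\<Union>n. {x\<in>S. d x \<ge> 1 / Suc n})" by (intro countable_UN) auto
  ultimately have cS: "countable S" by simp
  define h where "h = to_nat_on S"
  have hinj: "inj_on h S" using cS unfolding h_def by (simp add: inj_on_to_nat_on)
  define lt where "lt x y \<longleftrightarrow> d x > d y \<or> (d x = d y \<and> h x < h y)" for x y
  define P where "P y = {x\<in>S. lt x y}" for y
  have finP: "finite (P y)" if "y \<in> S" for y
  proof -
    have "P y \<subseteq> {x\<in>S. d x \<ge> d y}" unfolding P_def lt_def by auto
    moreover have "finite {x\<in>S. d x \<ge> d y}" using fin pos that by auto
    ultimately show ?thesis by (rule finite_subset)
  qed
  define r where "r y = card (P y)" for y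
  have lt_r: "r x < r y" if "x \<in> S" "y \<in> S" "lt x y" for x y
  proof -
    have "P x \<subset> P y"
    proof
      show "P x \<subseteq> P y" using that unfolding P_def lt_def by auto
      show "P x \<noteq> P y" using that unfolding P_def lt_def by auto
    qed
    then show ?thesis unfolding r_def using finP[OF that(2)] by (rule psubset_card_mono[rotated])
  qed
  have total: "lt x y \<or> lt y x" if "x \<in> S" "y \<in> S" "x \<noteq> y" for x y
  proof -
    have "h x \<noteq> h y" using hinj that by (auto dest: inj_onD)
    then show ?thesis unfolding lt_def by (cases "d x = d y") auto
  qed
  have rinj: "inj_on r S"
  proof (rule inj_onI)
    fix x y assume xy: "x \<in> S" "y \<in> S" "r x = r y"
    show "x = y"
    proof (rule ccontr)
      assume "x \<noteq> y"
      then have "lt x y \<or> lt y x" using total xy by blast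
      then show False using lt_r xy by fastforce
    qed
  qed
  have rmono: "d y \<le> d x" if "x \<in> S" "y \<in> S" "r x \<le> r y" for x y
  proof (rule ccontr)
    assume "\<not> d y \<le> d x"
    then have "lt y x" unfolding lt_def by simp
    then have "r y < r x" using lt_r that by blast
    then show False using that by simp
  qed
  show ?thesis
  proof (cases "finite S")
    case True
    have "r ` S \<subseteq> {..<card S}"
    proof
      fix k assume "k \<in> r ` S"
      then obtain y where y: "y \<in> S" "k = r y" by auto
      have "P y \<subseteq> S - {y}" unfolding P_def lt_def by auto
      then have "card (P y) \<le> card (S - {y})" using True by (intro card_mono) auto
      also have "\<dots> < card S" using True y by (meson card_Diff1_less)
      finally show "k \<in> {..<card S}" using y r_def by auto
    qed
    moreover have "card (r ` S) = card {..<card S}" using card_image[OF rinj] by simp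
    ultimately have rS: "r ` S = {..<card S}" by (intro card_subset_eq) auto
    have rb: "bij_betw r S {..<card S}" using rinj rS by (simp add: bij_betw_def)
    have sb: "bij_betw (\<lambda>i. i - 1) {1..card S} {..<card S}"
      by (rule bij_betw_byWitness[where f' = Suc]) auto
    define e where "e i = inv_into S r (i - 1)" for i
    have eb: "bij_betw e {1..card S} S"
      unfolding e_def using bij_betw_trans[OF sb bij_betw_inv_into[OF rb]] by (simp add: comp_def)
    have re: "r (e i) = i - 1" if "i \<in> {1..card S}" for i
      unfolding e_def using that rS by (intro f_inv_into_f) auto
    have "\<forall>i\<in>{1..card S}. \<forall>j\<in>{1..card S}. i \<le> j \<longrightarrow> d (e j) \<le> d (e i)"
    proof (intro ballI impI)
      fix i j assume ij: "i \<in> {1..card S}" "j \<in> {1..card S}" "i \<le> j"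
      show "d (e j) \<le> d (e i)"
        by (rule rmono) (use ij re bij_betwE[OF eb] in auto)
    qed
    note mono1 = this
    have A: "{1..card S} = {1..} \<or> (\<exists>n. {1..card S} = {1..n})" by blast
    show ?thesis
    proof (intro exI)
      show "({1..card S} = {1..} \<or> (\<exists>n. {1..card S} = {1..n})) \<and> bij_betw e {1..card S} S \<and>
        (\<forall>i\<in>{1..card S}. \<forall>j\<in>{1..card S}. i \<le> j \<longrightarrow> d (e j) \<le> d (e i))"
        using A eb mono1 by (intro conjI)
    qed
  next
    case False
    define R where "R = r ` S"
    have infR: "infinite R" unfolding R_def using False finite_imageD rinj by blast
    have rb: "bij_betw r S R" using rinj by (simp add: bij_betw_def R_def)
    have sb: "bij_betw (\<lambda>i. i - 1) {1::nat..} UNIV"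
      by (rule bij_betw_byWitness[where f' = Suc]) auto
    define e where "e i = inv_into S r (enumerate R (i - 1))" for i
    have eb: "bij_betw e {1..} S"
      unfolding e_def using bij_betw_trans[OF bij_betw_trans[OF sb bij_enumerate[OF infR]] bij_betw_inv_into[OF rb]]
      by (simp add: comp_def)
    have re: "r (e i) = enumerate R (i - 1)" for i
      unfolding e_def using enumerate_in_set[OF infR] R_def by (intro f_inv_into_f) auto
    have em: "enumerate R (i - 1) \<le> enumerate R (j - 1)" if "i \<le> j" for i j
      using strict_mono_enumerate[OF infR] that by (simp add: strict_mono_less_eq)
    have "\<forall>i\<in>{1..}. \<forall>j\<in>{1..}. i \<le> j \<longrightarrow> d (e j) \<le> d (e i)"
    proof (intro ballI impI)
      fix i j :: nat assume ij: "i \<in> {1..}" "j \<in> {1..}" "i \<le> j"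
      show "d (e j) \<le> d (e i)"
        by (rule rmono) (use ij re em bij_betwE[OF eb] in auto)
    qed
    note mono1 = this
    show ?thesis
    proof (intro exI)
      show "({1..} = {1..} \<or> (\<exists>n. {1::nat..} = {1..n})) \<and> bij_betw e {1..} S \<and>
        (\<forall>i\<in>{1..}. \<forall>j\<in>{1..}. i \<le> j \<longrightarrow> d (e j) \<le> d (e i))"
        using eb mono1 by (intro conjI disjI1 refl)
    qed
  qed
qed


lemma comp_hom:
  assumes "homeomorphism A B f g"
  shows "components B = (image f) ` components A"
proof -
  have "components B = connected_component_set B ` (f ` A)"
    unfolding components_def using homeomorphism_image1[OF assms] by simp
  also have "\<dots> = (\<lambda>x. f ` connected_component_set A x) ` A"
    using connected_component_set_homeomorphism[OF assms] by (simp add: image_image)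
  also have "\<dots> = (image f) ` components A"
    unfolding components_def by (simp add: image_image)
  finally show ?thesis .
qed

lemma branch_basic:
  fixes T :: "'a::metric_space set"
  assumes conn: "connected T" and lc: "locally connected T" and bT: "bounded T"
    and p: "p \<in> T" and A: "A \<in> components (T - {p})"
  shows "openin (top_of_set T) A" and "p \<in> closure A"
    and "\<And>a. a \<in> A \<Longrightarrow> dist p a \<le> diameter A" and "diameter A > 0"
proof -
  have oTp: "openin (top_of_set T) (T - {p})"
    by (simp add: openin_delete)
  show oA: "openin (top_of_set T) A"
    using lc A oTp unfolding locally_connected_open_component by blast
  have Asub: "A \<subseteq> T - {p}" using A by (rule in_components_subset)
  have Ane: "A \<noteq> {}" using A by (rule in_components_nonempty)
  show pc: "p \<in> closure A"
  proof (rule ccontr)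
    assume np: "p \<notin> closure A"
    obtain C where C: "closed C" "A = (T - {p}) \<inter> C"
      using closedin_component[OF A] by (auto simp: closedin_closed)
    have "closure A \<subseteq> C" using C by (simp add: closure_minimal)
    then have "A = T \<inter> closure A" using np C closure_subset[of A] Asub by auto
    then have "closedin (top_of_set T) A" by (metis closedin_closed_Int closed_closure inf_commute)
    then have "A = {} \<or> A = T" using conn oA unfolding connected_clopen by blast
    then show False using Ane Asub p by auto
  qed
  have bA: "bounded A" using bT Asub bounded_subset by blast
  show dA: "dist p a \<le> diameter A" if "a \<in> A" for a
  proof -
    have "dist p a \<le> diameter (closure A)"
      using pc that closure_subset[of A] bA by (intro diameter_bounded_bound) auto
    then show ?thesis using diameter_closure[OF bA] by simp
  qed
  show "diameter A > 0"
  proof (rule ccontr)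
    assume "\<not> diameter A > 0"
    obtain a where a: "a \<in> A" using Ane by auto
    have "\<forall>x\<in>A. x = a"
    proof
      fix x assume "x \<in> A"
      then have "dist a x \<le> diameter A" using diameter_bounded_bound[OF bA] a by blast
      then have "dist a x \<le> 0" using \<open>\<not> diameter A > 0\<close> by linarith
      then show "x = a" by simp
    qed
    then have "A = {a}" using a by blast
    then show False using pc Asub by auto
  qed
qed


lemma branch_null:
  fixes T :: "'a::metric_space set"
  assumes cT: "compact T" and lc: "locally connected T" and p: "p \<in> T" and dpos: "\<delta> > 0"
  shows "finite {A \<in> components (T - {p}). diameter A \<ge> \<delta>}"
proof (rule ccontr)
  let ?F = "{A \<in> components (T - {p}). diameter A \<ge> \<delta>}"
  assume "infinite ?F"
  then obtain \<sigma> :: "nat \<Rightarrow> 'a set" where sinj: "inj \<sigma>" and sF: "range \<sigma> \<subseteq> ?F"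
    using infinite_countable_subset by blast
  have oTp: "openin (top_of_set T) (T - {p})"
    by (simp add: openin_delete)
  have bT: "bounded T" using cT by (rule compact_imp_bounded)
  have sub: "\<sigma> n \<subseteq> T - {p}" for n using sF in_components_subset by blast
  have ex: "\<forall>n. \<exists>z. fst z \<in> \<sigma> n \<and> snd z \<in> \<sigma> n \<and> dist (fst z) (snd z) > \<delta>/2"
  proof
    fix n
    have "\<sigma> n \<subseteq> T" using sub by blast
    then have "bounded (\<sigma> n)" using bT by (rule bounded_subset[rotated])
    moreover have "\<sigma> n \<in> ?F" using sF by blast
    then have "\<delta>/2 < diameter (\<sigma> n)" using dpos by simp
    moreover have "\<delta>/2 > 0" using dpos by simp
    ultimately obtain u v where "u \<in> \<sigma> n" "v \<in> \<sigma> n" "\<delta>/2 < dist u v"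
      using diameter_lower_bounded by blast
    then show "\<exists>z. fst z \<in> \<sigma> n \<and> snd z \<in> \<sigma> n \<and> dist (fst z) (snd z) > \<delta>/2"
      by (intro exI[of _ "(u, v)"]) simp
  qed
  obtain z where z: "\<forall>n. fst (z n) \<in> \<sigma> n \<and> snd (z n) \<in> \<sigma> n \<and> dist (fst (z n)) (snd (z n)) > \<delta>/2"
    using choice[OF ex] by blast
  define x where "x n = fst (z n)" for n
  define y where "y n = snd (z n)" for n
  have xy: "\<And>n. x n \<in> \<sigma> n \<and> y n \<in> \<sigma> n \<and> dist (x n) (y n) > \<delta>/2"
    using z unfolding x_def y_def by blast
  have stuck: False if w: "\<And>n. w n \<in> \<sigma> (r n)" and r: "strict_mono r" and lim: "w \<longlonglongrightarrow> l"
    and l: "l \<in> T" "l \<noteq> p" for w r l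
  proof -
    define W where "W = connected_component_set (T - {p}) l"
    have W: "W \<in> components (T - {p})" unfolding W_def using l by (intro componentsI) auto
    have "openin (top_of_set T) W" using lc W oTp unfolding locally_connected_open_component by blast
    moreover have "l \<in> W" unfolding W_def using l by auto
    ultimately obtain e where e: "e > 0" "\<And>x. x \<in> T \<Longrightarrow> dist x l < e \<Longrightarrow> x \<in> W"
      unfolding openin_euclidean_subtopology_iff by (metis dist_commute)
    obtain N where N: "\<And>n. n \<ge> N \<Longrightarrow> dist (w n) l < e"
      using lim e(1) unfolding lim_sequentially by (metis dist_commute)
    have inW: "\<sigma> (r n) = W" if "n \<ge> N" for n
    proof -
      have "w n \<in> T" using w sub by blast
      then have "w n \<in> W" using e N that by blast
      moreover have "\<sigma> (r n) \<in> components (T - {p})" using sF by auto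
      ultimately show ?thesis using w W components_eq by blast
    qed
    then have "\<sigma> (r N) = \<sigma> (r (Suc N))" by simp
    then have "r N = r (Suc N)" using sinj by (simp add: inj_eq)
    then show False using r by (metis lessI strict_mono_less less_irrefl)
  qed
  have "compact (T \<times> T)" using cT by (simp add: compact_Times)
  then have sc: "seq_compact (T \<times> T)" by (rule compact_imp_seq_compact)
  have inTT: "\<forall>n. (\<lambda>n. (x n, y n)) n \<in> T \<times> T" using xy sub by blast
  obtain ab r where ab: "ab \<in> T \<times> T" and r: "strict_mono r"
    and lim: "((\<lambda>n. (x n, y n)) \<circ> r) \<longlonglongrightarrow> ab"
    using seq_compactE[OF sc inTT] by blast
  obtain a b where abeq: "ab = (a, b)" by fastforce
  have la: "(\<lambda>n. x (r n)) \<longlonglongrightarrow> a" using tendsto_fst[OF lim] abeq by (simp add: comp_def)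
  have lb: "(\<lambda>n. y (r n)) \<longlonglongrightarrow> b" using tendsto_snd[OF lim] abeq by (simp add: comp_def)
  have "(\<lambda>n. dist (x (r n)) (y (r n))) \<longlonglongrightarrow> dist a b" using la lb by (rule tendsto_dist)
  then have "dist a b \<ge> \<delta>/2"
    by (rule LIMSEQ_le_const) (use xy less_imp_le in blast)
  then have "a \<noteq> p \<or> b \<noteq> p" using dpos by auto
  then show False
  proof
    assume "a \<noteq> p"
    then show False using stuck[of "\<lambda>n. x (r n)" r a] xy r la ab abeq by auto
  next
    assume "b \<noteq> p"
    then show False using stuck[of "\<lambda>n. y (r n)" r b] xy r lb ab abeq by auto
  qed
qed


lemma diameter_le_metric:
  fixes S :: "'a::metric_space set"
  assumes "0 \<le> d" and "\<And>x y. x \<in> S \<Longrightarrow> y \<in> S \<Longrightarrow> dist x y \<le> d"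
  shows "diameter S \<le> d"
  using assms unfolding diameter_def by (auto intro!: cSUP_least)

lemma qs_bound:
  fixes T :: "'a::metric_space set" and T' :: "'b::metric_space set"
  assumes hom: "homeomorphism T T' f g"
    and qs: "\<forall>x\<in>T. \<forall>a\<in>T. \<forall>b\<in>T. x \<noteq> b \<longrightarrow> dist (f x) (f a) / dist (f x) (f b) \<le> \<eta> (dist x a / dist x b)"
    and M: "\<forall>t\<in>{0..4*C}. \<eta> t \<le> M" and M0: "M \<ge> 0"
    and bp: "\<And>p A. p \<in> T \<Longrightarrow> A \<in> components (T - {p}) \<Longrightarrow> diameter A > 0"
    and bp': "\<And>p' A' a'. p' \<in> T' \<Longrightarrow> A' \<in> components (T' - {p'}) \<Longrightarrow> a' \<in> A' \<Longrightarrow> dist p' a' \<le> diameter A'"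
    and bp2: "\<And>p A a. p \<in> T \<Longrightarrow> A \<in> components (T - {p}) \<Longrightarrow> a \<in> A \<Longrightarrow> dist p a \<le> diameter A"
    and bT: "bounded T"
    and p: "p \<in> T" and A: "A \<in> components (T - {p})" and B: "B \<in> components (T - {p})"
    and AB: "diameter A \<le> C * diameter B"
  shows "diameter (f ` A) \<le> 2 * M * diameter (f ` B)"
proof -
  have finj: "inj_on f T" using hom by (metis homeomorphism_apply1 inj_on_inverseI)
  have fT: "f ` T = T'" using hom by (rule homeomorphism_image1)
  have "f ` (T - {p}) = T' - {f p}" using finj fT p by (auto simp: inj_on_def)
  then have hom2: "homeomorphism (T - {p}) (T' - {f p}) f g"
    using hom by (rule homeomorphism_of_subsets[rotated 3]) auto
  have fB: "f ` B \<in> components (T' - {f p})" using comp_hom[OF hom2] B by auto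
  have Asub: "A \<subseteq> T - {p}" and Bsub: "B \<subseteq> T - {p}" using A B in_components_subset by blast+
  have dB: "diameter B > 0" using bp[OF p B] .
  have bB: "bounded B" using Bsub bT bounded_subset by (metis Diff_subset subset_trans)
  obtain x y where xy: "x \<in> B" "y \<in> B" "dist x y > diameter B / 2"
    using diameter_lower_bounded[OF bB, of "diameter B / 2"] dB by auto
  have "dist x y \<le> dist p x + dist p y" by (metis dist_commute dist_triangle)
  then have "dist p x \<ge> diameter B / 4 \<or> dist p y \<ge> diameter B / 4" using xy by linarith
  then obtain b where b: "b \<in> B" "dist p b \<ge> diameter B / 4"
    using xy by blast
  have bT': "b \<in> T" "b \<noteq> p" using b Bsub by auto
  have C0: "C \<ge> 0"
  proof -
    obtain a where "a \<in> A" using A in_components_nonempty by blast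
    then have "diameter A \<ge> 0" using bp2[OF p A] by (meson zero_le_dist order_trans) 
    then show ?thesis using AB dB by (smt (verit) mult_neg_pos)
  qed
  have fpb: "dist (f p) (f b) > 0" using finj bT' p by (auto simp: inj_on_def)
  have fbd: "dist (f p) (f b) \<le> diameter (f ` B)"
    using bp'[OF _ fB] b fT p by auto
  have key: "dist (f p) (f a) \<le> M * diameter (f ` B)" if a: "a \<in> A" for a
  proof -
    have aT: "a \<in> T" using a Asub by auto
    have pb: "dist p b > 0" using bT' by simp
    have "dist p a \<le> diameter A" using bp2[OF p A a] .
    also have "\<dots> \<le> C * diameter B" by (rule AB)
    also have "\<dots> \<le> C * (4 * dist p b)" using b C0 by (intro mult_left_mono) auto
    finally have "dist p a / dist p b \<le> 4 * C" using pb by (simp add: divide_le_eq mult_ac)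
    then have "\<eta> (dist p a / dist p b) \<le> M" using M by auto
    then have "dist (f p) (f a) / dist (f p) (f b) \<le> M" using qs p aT bT' by (metis order_trans)
    then have "dist (f p) (f a) \<le> M * dist (f p) (f b)" using fpb by (simp add: divide_le_eq)
    also have "\<dots> \<le> M * diameter (f ` B)" using fbd M0 by (rule mult_left_mono)
    finally show ?thesis .
  qed
  have "0 \<le> diameter (f ` B)" using fbd fpb by linarith
  show ?thesis
  proof (rule diameter_le_metric)
    show "0 \<le> 2 * M * diameter (f ` B)" using M0 \<open>0 \<le> diameter (f ` B)\<close> by simp
    fix u v assume "u \<in> f ` A" "v \<in> f ` A"
    then obtain a a' where "a \<in> A" "a' \<in> A" "u = f a" "v = f a'" by auto
    then have "dist u v \<le> dist (f p) u + dist (f p) v" by (metis dist_commute dist_triangle)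
    also have "\<dots> \<le> M * diameter (f ` B) + M * diameter (f ` B)"
      using key \<open>a \<in> A\<close> \<open>a' \<in> A\<close> \<open>u = f a\<close> \<open>v = f a'\<close> by (intro add_mono) auto
    finally show "dist u v \<le> 2 * M * diameter (f ` B)" by simp
  qed
qed


lemma all_ge:
  fixes T :: "'a::metric_space set"
  assumes lab: "branch_labelling T p I e" and three: "3 \<in> I" and C: "C \<ge> 1"
    and grow: "\<forall>i\<in>I. i \<ge> 3 \<longrightarrow> diameter (e i) \<ge> diameter (e 3) / C"
    and pos: "\<forall>A\<in>branches T p. diameter A > 0"
    and D: "D \<in> branches T p"
  shows "diameter D \<ge> diameter (e 3) / C"
proof -
  have bij: "bij_betw e I (branches T p)" and mono: "\<forall>i\<in>I. \<forall>j\<in>I. i \<le> j \<longrightarrow> diameter (e j) \<le> diameter (e i)"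
    using lab unfolding branch_labelling_def by auto
  obtain i where i: "i \<in> I" "D = e i" using bij D by (metis bij_betw_imp_surj_on imageE)
  have p3: "diameter (e 3) > 0" using pos bij three by (simp add: bij_betw_apply)
  have le: "diameter (e 3) / C \<le> diameter (e 3)" using p3 C by (simp add: divide_le_eq)
  show ?thesis
  proof (cases "i \<ge> 3")
    case True then show ?thesis using grow i by auto
  next
    case False
    then have "diameter (e 3) \<le> diameter (e i)" using mono i three by auto
    then show ?thesis using le i(2) by simp
  qed
qed

theorem lemma2p7:
  fixes T :: "'a::metric_space set" and T' :: "'b::metric_space set"
    and f :: "'a \<Rightarrow> 'b"
  assumes "metric_tree T"
    and "uniform_branch_growth T"
    and "quasisymmetric T T' f"
  shows "uniform_branch_growth T'"
proof -
  have cT: "compact T" using assms(1) unfolding metric_tree_def by (elim conjE) assumption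
  have conT: "connected T" using assms(1) unfolding metric_tree_def by (elim conjE) assumption
  have lcT: "locally connected T" using assms(1) unfolding metric_tree_def by (elim conjE) assumption
  have bT: "bounded T" using cT by (rule compact_imp_bounded)
  obtain C where C1: "C \<ge> 1" and growT: "\<And>p I B. branch_point T p \<Longrightarrow> branch_labelling T p I B \<Longrightarrow>
      (\<forall>i\<in>I. i \<ge> 3 \<longrightarrow> diameter (B i) \<ge> diameter (B 3) / C)"
    using assms(2) unfolding uniform_branch_growth_def by blast
  obtain g \<eta> \<eta>' where hom: "homeomorphism T T' f g" and heta: "homeomorphism {0::real..} {0..} \<eta> \<eta>'"
    and qs: "\<forall>x\<in>T. \<forall>a\<in>T. \<forall>b\<in>T. x \<noteq> b \<longrightarrow> dist (f x) (f a) / dist (f x) (f b) \<le> \<eta> (dist x a / dist x b)"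
    using assms(3) unfolding quasisymmetric_def by blast
  have "continuous_on {0..4*C} \<eta>"
    using heta unfolding homeomorphism_def by (meson atLeastAtMost_iff atLeast_iff continuous_on_subset subsetI)
  then have "compact (\<eta> ` {0..4*C})" by (intro compact_continuous_image) auto
  then have "bounded (\<eta> ` {0..4*C})" by (rule compact_imp_bounded)
  then obtain M0 where M0: "\<forall>t\<in>{0..4*C}. norm (\<eta> t) \<le> M0"
    unfolding bounded_iff by fast
  define M where "M = max 0 M0"
  have M: "\<forall>t\<in>{0..4*C}. \<eta> t \<le> M" and Mnn: "M \<ge> 0" using M0 unfolding M_def by force+
  have fT: "f ` T = T'" using hom by (rule homeomorphism_image1)
  have contf: "continuous_on T f" using hom unfolding homeomorphism_def by auto
  have cT': "compact T'" using compact_continuous_image[OF contf cT] fT by simp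
  have conT': "connected T'" using connected_continuous_image[OF contf conT] fT by simp
  have "locally connected T \<longleftrightarrow> locally connected T'"
    by (rule homeomorphism_locally[OF hom]) (meson homeomorphic_def homeomorphic_connectedness)
  then have lcT': "locally connected T'" using lcT by simp
  have bT': "bounded T'" using cT' by (rule compact_imp_bounded)
  have pos: "\<And>p A. p \<in> T \<Longrightarrow> A \<in> components (T - {p}) \<Longrightarrow> diameter A > 0"
    using branch_basic(4)[OF conT lcT bT] by blast
  have bp2: "\<And>p A a. p \<in> T \<Longrightarrow> A \<in> components (T - {p}) \<Longrightarrow> a \<in> A \<Longrightarrow> dist p a \<le> diameter A"
    using branch_basic(3)[OF conT lcT bT] by blast
  have bp': "\<And>p' A' a'. p' \<in> T' \<Longrightarrow> A' \<in> components (T' - {p'}) \<Longrightarrow> a' \<in> A' \<Longrightarrow> dist p' a' \<le> diameter A'"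
    using branch_basic(3)[OF conT' lcT' bT'] by blast
  have labex: "\<exists>(I::nat set) e. (I = {1..} \<or> (\<exists>n. I = {1..n})) \<and> bij_betw e I (branches T p) \<and>
           (\<forall>i\<in>I. \<forall>j\<in>I. i \<le> j \<longrightarrow> diameter (e j) \<le> diameter (e i))" if p: "p \<in> T" for p
  proof (rule exists_sorted_enum)
    show "\<forall>x\<in>branches T p. 0 < diameter x" using pos p unfolding branches_def by blast
    show "\<forall>\<delta>>0. finite {x \<in> branches T p. \<delta> \<le> diameter x}"
      using branch_null[OF cT lcT p] unfolding branches_def by blast
  qed
  have finS: "finite (branches T p)" if p: "p \<in> T" for p
  proof (rule ccontr)
    assume inf: "infinite (branches T p)"
    obtain I :: "nat set" and e where I: "I = {1..} \<or> (\<exists>n. I = {1..n})" and eb: "bij_betw e I (branches T p)"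
      and em: "\<forall>i\<in>I. \<forall>j\<in>I. i \<le> j \<longrightarrow> diameter (e j) \<le> diameter (e i)"
      using labex[OF p] by blast
    have "infinite I" using eb inf bij_betw_finite by blast
    then have Ieq: "I = {1..}" using I by auto
    have lab: "branch_labelling T p I e" unfolding branch_labelling_def using I eb em by blast
    have inI: "1 \<in> I" "2 \<in> I" "3 \<in> I" using Ieq by auto
    have einj: "inj_on e I" using eb by (simp add: bij_betw_def)
    have "e 1 \<noteq> e 2" "e 1 \<noteq> e 3" "e 2 \<noteq> e 3"
      using inj_on_eq_iff[OF einj] inI by fastforce+
    moreover have "e 1 \<in> branches T p" "e 2 \<in> branches T p" "e 3 \<in> branches T p"
      using bij_betw_apply[OF eb] inI by blast+
    ultimately have bpt: "branch_point T p" unfolding branch_point_def using p by blast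
    have posS: "\<forall>A\<in>branches T p. diameter A > 0" using pos p unfolding branches_def by blast
    define \<delta> where "\<delta> = diameter (e 3) / C"
    have dpos: "\<delta> > 0" using posS bij_betw_apply[OF eb inI(3)] C1 unfolding \<delta>_def by simp
    have "branches T p \<subseteq> {A \<in> components (T - {p}). diameter A \<ge> \<delta>}"
      using all_ge[OF lab inI(3) C1 growT[OF bpt lab] posS] unfolding \<delta>_def branches_def by blast
    then have "finite (branches T p)" using branch_null[OF cT lcT p dpos] finite_subset by blast
    then show False using inf by simp
  qed
  define C' where "C' = max 1 (2 * M)"
  show ?thesis unfolding uniform_branch_growth_def
  proof (intro exI[of _ C'] conjI allI impI ballI)
    show "1 \<le> C'" unfolding C'_def by simp
    fix p' I' B' i
    assume bpt': "branch_point T' p'" and lab': "branch_labelling T' p' I' B'" and i: "i \<in> I'" "3 \<le> i"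
    have p'T: "p' \<in> T'" using bpt' unfolding branch_point_def by auto
    define p where "p = g p'"
    have pT: "p \<in> T" and fp: "f p = p'" using hom p'T unfolding p_def homeomorphism_def by auto
    have finj: "inj_on f T" using hom by (metis homeomorphism_apply1 inj_on_inverseI)
    have "f ` (T - {p}) = T' - {f p}" using finj fT pT by (auto simp: inj_on_def)
    then have hom2: "homeomorphism (T - {p}) (T' - {f p}) f g"
      using hom by (rule homeomorphism_of_subsets[rotated 3]) auto
    have brT': "branches T' p' = image f ` branches T p"
      unfolding branches_def using comp_hom[OF hom2] fp by simp
    have eb': "bij_betw B' I' (branches T' p')" and em': "\<forall>i\<in>I'. \<forall>j\<in>I'. i \<le> j \<longrightarrow> diameter (B' j) \<le> diameter (B' i)"
      and I': "I' = {1..} \<or> (\<exists>n. I' = {1..n})"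
      using lab' unfolding branch_labelling_def by auto
    obtain X1 X2 X3 where X: "X1 \<in> branches T' p'" "X2 \<in> branches T' p'" "X3 \<in> branches T' p'"
      "X1 \<noteq> X2" "X1 \<noteq> X3" "X2 \<noteq> X3" using bpt' unfolding branch_point_def by blast
    have c3: "card {X1, X2, X3} = 3" using X by simp
    have in3: "1 \<in> I' \<and> 2 \<in> I' \<and> 3 \<in> I'"
    proof (cases "I' = {1..}")
      case True then show ?thesis by auto
    next
      case False
      then obtain n where n: "I' = {1..n}" using I' by blast
      have "card {X1, X2, X3} \<le> card (branches T' p')"
        using X eb' n bij_betw_finite by (intro card_mono) auto
      also have "\<dots> = n" using bij_betw_same_card[OF eb'] n by simp
      finally show ?thesis using c3 n by auto
    qed
    have S: "finite (branches T p)" using finS[OF pT] .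
    obtain I :: "nat set" and e where I: "I = {1..} \<or> (\<exists>n. I = {1..n})" and eb: "bij_betw e I (branches T p)"
      and em: "\<forall>i\<in>I. \<forall>j\<in>I. i \<le> j \<longrightarrow> diameter (e j) \<le> diameter (e i)"
      using labex[OF pT] by blast
    have "finite I" using eb S bij_betw_finite by blast
    then obtain n where n: "I = {1..n}" using I infinite_Ici[of "1::nat"] by auto
    have lab: "branch_labelling T p I e" unfolding branch_labelling_def using I eb em by blast
    have cardS: "card (branches T p) = n" using bij_betw_same_card[OF eb] n by simp
    have "card (branches T' p') \<le> card (branches T p)" unfolding brT' using S by (rule card_image_le)
    moreover have "card {X1, X2, X3} \<le> card (branches T' p')"
    proof (rule card_mono)
      show "finite (branches T' p')" unfolding brT' using S by (rule finite_imageI)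
      show "{X1, X2, X3} \<subseteq> branches T' p'" using X(1-3) by blast
    qed
    ultimately have n3: "n \<ge> 3" using c3 cardS by linarith
    then have inI3: "3 \<in> I" using n by auto
    obtain Y1 Y2 Y3 where Y: "Y1 \<in> branches T p" "Y2 \<in> branches T p" "Y3 \<in> branches T p"
      "X1 = f ` Y1" "X2 = f ` Y2" "X3 = f ` Y3" using X(1-3) unfolding brT' by (meson imageE)
    have bpt: "branch_point T p" unfolding branch_point_def using pT Y X(4-6) by blast
    have posS: "\<forall>A\<in>branches T p. diameter A > 0" using pos pT unfolding branches_def by blast
    have ge: "\<And>D. D \<in> branches T p \<Longrightarrow> diameter D \<ge> diameter (e 3) / C"
      using all_ge[OF lab inI3 C1 growT[OF bpt lab] posS] by blast
    have "\<exists>j. j \<in> I \<and> B' k = f ` e j" if "k \<in> I'" for k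
    proof -
      have "B' k \<in> branches T' p'" using eb' that by (rule bij_betw_apply)
      then obtain D where D: "D \<in> branches T p" "B' k = f ` D" using brT' by blast
      then obtain j where "j \<in> I" "D = e j" using eb by (metis bij_betw_imp_surj_on imageE)
      then show ?thesis using D by blast
    qed
    then have ex: "\<forall>k\<in>I'. \<exists>j. j \<in> I \<and> B' k = f ` e j" by blast
    obtain j where j0: "\<forall>k\<in>I'. j k \<in> I \<and> B' k = f ` e (j k)" using bchoice[OF ex] by blast
    then have j: "\<And>k. k \<in> I' \<Longrightarrow> j k \<in> I \<and> B' k = f ` e (j k)" by blast
    have B'inj: "inj_on B' I'" using eb' by (simp add: bij_betw_def)
    have jne: "j a \<noteq> j b" if "a \<in> I'" "b \<in> I'" "a \<noteq> b" for a b
    proof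
      assume "j a = j b"
      then have "B' a = B' b" using j that by metis
      then show False using B'inj that unfolding inj_on_def by blast
    qed
    have jd: "j 1 \<noteq> j 2" "j 1 \<noteq> j 3" "j 2 \<noteq> j 3"
      using in3 jne[of 1 2] jne[of 1 3] jne[of 2 3] by simp_all
    have j1: "j 1 \<ge> 1" "j 2 \<ge> 1" "j 3 \<ge> 1" using j in3 n by auto
    have "j 1 \<ge> 3 \<or> j 2 \<ge> 3 \<or> j 3 \<ge> 3" using jd j1 by arith
    then have "\<exists>k\<in>{1,2,3}. j k \<ge> 3" by blast
    then obtain k where k: "k \<in> {1,2,3}" "j k \<ge> 3" by blast
    have kI': "k \<in> I'" using k in3 by auto
    define A where "A = e (j k)"
    have AS: "A \<in> branches T p" unfolding A_def using j[OF kI'] eb by (simp add: bij_betw_apply)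
    have jkI: "j k \<in> I" and BkA: "B' k = f ` A" using j[OF kI'] unfolding A_def by auto
    have Am: "diameter A \<le> diameter (e 3)"
      unfolding A_def using em jkI k(2) inI3 by blast
    have k3: "k \<le> 3" using k(1) by auto
    have "diameter (B' 3) \<le> diameter (B' k)" using em' kI' in3 k3 by blast
    then have B3: "diameter (B' 3) \<le> diameter (f ` A)" using BkA by simp
    have "B' i \<in> branches T' p'" using eb' i(1) by (rule bij_betw_apply)
    then have "B' i \<in> image f ` branches T p" using brT' by simp
    then obtain D where D: "D \<in> branches T p" "B' i = f ` D" by (rule imageE) simp
    have "diameter (e 3) / C \<le> diameter D" using ge[OF D(1)] .
    then have "diameter (e 3) \<le> C * diameter D" using C1 by (simp add: divide_le_eq mult_ac)
    then have AD: "diameter A \<le> C * diameter D" using Am by linarith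
    have AS': "A \<in> components (T - {p})" using AS unfolding branches_def .
    have DS': "D \<in> components (T - {p})" using D(1) unfolding branches_def .
    have "diameter (f ` A) \<le> 2 * M * diameter (f ` D)"
      using qs_bound[OF hom qs M Mnn pos bp' bp2 bT pT AS' DS' AD] .
    then have le1: "diameter (B' 3) \<le> 2 * M * diameter (B' i)" using B3 D by simp
    have "B' i \<subseteq> T'" using \<open>B' i \<in> branches T' p'\<close> in_components_subset unfolding branches_def by blast
    then have Di: "diameter (B' i) \<ge> 0" using bT' bounded_subset diameter_ge_0 by blast
    have "2 * M * diameter (B' i) \<le> C' * diameter (B' i)" unfolding C'_def using Di by (intro mult_right_mono) auto
    then have "diameter (B' 3) \<le> C' * diameter (B' i)" using le1 by linarith
    then have le2: "diameter (B' 3) \<le> diameter (B' i) * C'" by (simp only: mult.commute)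
    have "C' > 0" unfolding C'_def by simp
    then show "diameter (B' 3) / C' \<le> diameter (B' i)" using le2 by (simp only: pos_divide_le_eq)
  qed
qed

end
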